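(* Suppose $S\subseteq\mathbb{N}^{\mathbb{N}}$ is defined by a sentence $\exists x\,\forall y\,\phi$ of $\mathscr{L}_{\max}$, where $\phi$ is quantifier-free. Then $S$ is overguessable.
   Context: $\mathbb{N}^{<\mathbb{N}}$ denotes the finite sequences of naturals. $S\subseteq\mathbb{N}^{\mathbb{N}}$ is overguessable if there is a function $\mu:\mathbb{N}^{<\mathbb{N}}\to\mathbb{N}\cup\{\infty\}$ such that (1) for every $f\in S$, the values $\mu(f(0),\ldots,f(n))$ are bounded by some finite number for all sufficiently large $n$; and (2) for every $f\notin S$, $\mu(f(0),\ldots,f(n))\to\infty$ as $n\to\infty$. The language $\mathscr{L}_{\max}$ is a first-order language extended with ellipses: constant symbols $\mathbf{n}$ (also $\bar n$) for each $n\in\mathbb{N}$; an $n$-ary function symbol $\tilde w$ for each $w:\mathbb{N}^n\to\mathbb{N}$ ($n>0$); an $n$-ary predicate symbol $\tilde p$ for each $p\subseteq\mathbb{N}^n$ ($n>0$); an $\mathbb{N}^{<\mathbb{N}}$-ary function symbol $\tilde G$ for each $G:\mathbb{N}^{<\mathbb{N}}\to\mathbb{N}$ (applicable to any finite number of arguments); a unary function symbol $\mathbf{f}$; and a symbol $\cdots_x$ for each variable $x$. Besides the usual terms, for $\mathbb{N}^{<\mathbb{N}}$-ary $G$, terms $u,v$ and variable $x$, $G(u(\mathbf{0}),\cdots_x,u(v))$ is a term with free variables $(FV(u)\setminus\{x\})\cup FV(v)$. Formulas are built as usual. For $f:\mathbb{N}\to\mathbb{N}$, $\mathscr{M}_f$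 is the structure on $\mathbb{N}$ interpreting every symbol as the object it names and $\mathbf{f}$ as $f$; terms are evaluated as usual, plus $G(u(\mathbf{0}),\cdots_x,u(v))^{s}=G\big(u(x|\mathbf{0})^{s},\ldots,u(x|\overline{v^{s}})^{s}\big)$ under an assignment $s$, where $u(x|c)$ is substitution of the constant $c$ for $x$ in $u$. A sentence $\phi$ defines $S\subseteq\mathbb{N}^{\mathbb{N}}$ if for every $f:\mathbb{N}\to\mathbb{N}$, $\mathscr{M}_f\models\phi$ iff $f\in S$. *)

theory Defs
  imports Main "HOL-Library.Extended_Nat"
begin

text \<open>Fn w ts : an n-ary function symbol (n = length ts > 0) naming w : N^n -> N,
            where w is given as a function on lists of length n.
  GFn G ts : an N^{<N}-ary function symbol naming G, applied to finitely many args.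
  Ell G u x v : the ellipsis term G(u(0), ..._x, u(v)).\<close>
datatype trm =
    Var nat
  | Cst nat
  | Fn "nat list \<Rightarrow> nat" "trm list"
  | GFn "nat list \<Rightarrow> nat" "trm list"
  | FSym trm
  | Ell "nat list \<Rightarrow> nat" trm nat trm

datatype fml =
    Eq trm trm
  | Pred "nat list \<Rightarrow> bool" "trm list"
  | Neg fml
  | Conj fml fml
  | Disj fml fml
  | Imp fml fml
  | All nat fml
  | Ex nat fml

fun FVt :: "trm \<Rightarrow> nat set" where
  "FVt (Var x) = {x}"
| "FVt (Cst n) = {}"
| "FVt (Fn w ts) = (\<Union>t\<in>set ts. FVt t)"
| "FVt (GFn G ts) = (\<Union>t\<in>set ts. FVt t)"
| "FVt (FSym t) = FVt t"
| "FVt (Ell G u x v) = (FVt u - {x}) \<union> FVt v"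

fun wf_trm :: "trm \<Rightarrow> bool" where
  "wf_trm (Var x) = True"
| "wf_trm (Cst n) = True"
| "wf_trm (Fn w ts) = (ts \<noteq> [] \<and> (\<forall>t\<in>set ts. wf_trm t))"
| "wf_trm (GFn G ts) = (\<forall>t\<in>set ts. wf_trm t)"
| "wf_trm (FSym t) = wf_trm t"
| "wf_trm (Ell G u x v) = (wf_trm u \<and> wf_trm v)"

fun FV :: "fml \<Rightarrow> nat set" where
  "FV (Eq s t) = FVt s \<union> FVt t"
| "FV (Pred p ts) = (\<Union>t\<in>set ts. FVt t)"
| "FV (Neg a) = FV a"
| "FV (Conj a b) = FV a \<union> FV b"
| "FV (Disj a b) = FV a \<union> FV b"
| "FV (Imp a b) = FV a \<union> FV b"
| "FV (All x a) = FV a - {x}"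
| "FV (Ex x a) = FV a - {x}"

fun wf_fml :: "fml \<Rightarrow> bool" where
  "wf_fml (Eq s t) = (wf_trm s \<and> wf_trm t)"
| "wf_fml (Pred p ts) = (ts \<noteq> [] \<and> (\<forall>t\<in>set ts. wf_trm t))"
| "wf_fml (Neg a) = wf_fml a"
| "wf_fml (Conj a b) = (wf_fml a \<and> wf_fml b)"
| "wf_fml (Disj a b) = (wf_fml a \<and> wf_fml b)"
| "wf_fml (Imp a b) = (wf_fml a \<and> wf_fml b)"
| "wf_fml (All x a) = wf_fml a"
| "wf_fml (Ex x a) = wf_fml a"

fun qfree :: "fml \<Rightarrow> bool" where
  "qfree (Eq s t) = True"
| "qfree (Pred p ts) = True"
| "qfree (Neg a) = qfree a"
| "qfree (Conj a b) = (qfree a \<and> qfree b)"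
| "qfree (Disj a b) = (qfree a \<and> qfree b)"
| "qfree (Imp a b) = (qfree a \<and> qfree b)"
| "qfree (All x a) = False"
| "qfree (Ex x a) = False"

definition sentence :: "fml \<Rightarrow> bool" where
  "sentence \<phi> \<longleftrightarrow> wf_fml \<phi> \<and> FV \<phi> = {}"

text \<open>Evaluation in M_f under assignment s. For the ellipsis term, substituting the
  constant c for (free occurrences of) x in u is evaluated as u under s(x := c).\<close>
fun evalt :: "(nat \<Rightarrow> nat) \<Rightarrow> (nat \<Rightarrow> nat) \<Rightarrow> trm \<Rightarrow> nat" where
  "evalt f s (Var x) = s x"
| "evalt f s (Cst n) = n"
| "evalt f s (Fn w ts) = w (map (evalt f s) ts)"
| "evalt f s (GFn G ts) = G (map (evalt f s) ts)"
| "evalt f s (FSym t) = f (evalt f s t)"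
| "evalt f s (Ell G u x v) = G (map (\<lambda>i. evalt f (s(x := i)) u) [0..<Suc (evalt f s v)])"

fun sat :: "(nat \<Rightarrow> nat) \<Rightarrow> (nat \<Rightarrow> nat) \<Rightarrow> fml \<Rightarrow> bool" where
  "sat f s (Eq a b) = (evalt f s a = evalt f s b)"
| "sat f s (Pred p ts) = p (map (evalt f s) ts)"
| "sat f s (Neg a) = (\<not> sat f s a)"
| "sat f s (Conj a b) = (sat f s a \<and> sat f s b)"
| "sat f s (Disj a b) = (sat f s a \<or> sat f s b)"
| "sat f s (Imp a b) = (sat f s a \<longrightarrow> sat f s b)"
| "sat f s (All x a) = (\<forall>n. sat f (s(x := n)) a)"
| "sat f s (Ex x a) = (\<exists>n. sat f (s(x := n)) a)"

text \<open>M_f |= phi for a sentence phi (assignment irrelevant; we use the zero assignment).\<close>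
definition models :: "(nat \<Rightarrow> nat) \<Rightarrow> fml \<Rightarrow> bool" where
  "models f \<phi> \<longleftrightarrow> sat f (\<lambda>_. 0) \<phi>"

definition defines_set :: "fml \<Rightarrow> (nat \<Rightarrow> nat) set \<Rightarrow> bool" where
  "defines_set \<phi> S \<longleftrightarrow> sentence \<phi> \<and> (\<forall>f. models f \<phi> \<longleftrightarrow> f \<in> S)"

definition init :: "(nat \<Rightarrow> nat) \<Rightarrow> nat \<Rightarrow> nat list" where
  "init f n = map f [0..<Suc n]"

definition overguessable :: "(nat \<Rightarrow> nat) set \<Rightarrow> bool" where
  "overguessable S \<longleftrightarrow> (\<exists>\<mu> :: nat list \<Rightarrow> enat.
     (\<forall>f\<in>S. \<exists>B::nat. \<forall>\<^sub>F n in sequentially. \<mu> (init f n) \<le> enat B) \<and>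
     (\<forall>f. f \<notin> S \<longrightarrow> (\<forall>B::nat. \<forall>\<^sub>F n in sequentially. enat B \<le> \<mu> (init f n))))"

end

theory Submission
  imports Defs
begin

lemma map_loc:
  assumes "\<And>t. t \<in> set ts \<Longrightarrow> \<exists>N. \<forall>g. (\<forall>i\<le>N. g i = f i) \<longrightarrow> F g t = F f t"
  shows "\<exists>N. \<forall>g. (\<forall>i\<le>N. g i = (f::nat\<Rightarrow>nat) i) \<longrightarrow> map (F g) ts = map (F f) ts"
  using assms
proof (induction ts)
  case Nil
  then show ?case by simp
next
  case (Cons t ts)
  have "t \<in> set (t # ts)" by simp
  then obtain N1 where N1: "\<forall>g. (\<forall>i\<le>N1. g i = f i) \<longrightarrow> F g t = F f t" using Cons.prems by blast
  have "\<And>t'. t' \<in> set ts \<Longrightarrow> \<exists>N. \<forall>g. (\<forall>i\<le>N. g i = f i) \<longrightarrow> F g t' = F f t'"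
    using Cons.prems by simp
  then obtain N2 where N2: "\<forall>g. (\<forall>i\<le>N2. g i = f i) \<longrightarrow> map (F g) ts = map (F f) ts"
    using Cons.IH by blast
  show ?case
  proof (intro exI[of _ "max N1 N2"] allI impI)
    fix g assume g: "\<forall>i\<le>max N1 N2. g i = f i"
    have g1: "\<forall>i\<le>N1. g i = f i" and g2: "\<forall>i\<le>N2. g i = f i" using g by simp_all
    have "F g t = F f t" using N1 g1 by blast
    moreover have "map (F g) ts = map (F f) ts" using N2 g2 by blast
    ultimately show "map (F g) (t # ts) = map (F f) (t # ts)" by simp
  qed
qed

lemma loc2:
  assumes "\<forall>g. (\<forall>i\<le>N1. g i = (f::nat\<Rightarrow>nat) i) \<longrightarrow> P g = P f"
    and "\<forall>g. (\<forall>i\<le>N2. g i = f i) \<longrightarrow> Q g = Q f"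
    and "\<And>g. P g = P f \<Longrightarrow> Q g = Q f \<Longrightarrow> R g = R f"
  shows "\<exists>N. \<forall>g. (\<forall>i\<le>N. g i = f i) \<longrightarrow> R g = R f"
proof (intro exI[of _ "max N1 N2"] allI impI)
  fix g assume g: "\<forall>i\<le>max N1 N2. g i = f i"
  have g1: "\<forall>i\<le>N1. g i = f i" and g2: "\<forall>i\<le>N2. g i = f i" using g by simp_all
  show "R g = R f" using assms(1) g1 assms(2) g2 assms(3) by blast
qed

lemma evalt_loc:
  "\<exists>N. \<forall>g. (\<forall>i\<le>N. g i = f i) \<longrightarrow> evalt g s t = evalt f s t"
proof (induction t arbitrary: s)
  case (Var x)
  then show ?case by simp
next
  case (Cst x)
  then show ?case by simp
next
  case (Fn w ts)
  obtain N where N: "\<forall>g. (\<forall>i\<le>N. g i = f i) \<longrightarrow> map (\<lambda>t. evalt g s t) ts = map (\<lambda>t. evalt f s t) ts"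
    using map_loc[of ts f "\<lambda>g t. evalt g s t"] Fn by blast
  show ?case
  proof (intro exI[of _ N] allI impI)
    fix g assume "\<forall>i\<le>N. g i = f i"
    then have "map (\<lambda>t. evalt g s t) ts = map (\<lambda>t. evalt f s t) ts" using N by blast
    then show "evalt g s (Fn w ts) = evalt f s (Fn w ts)" by (simp only: evalt.simps)
  qed
next
  case (GFn G ts)
  obtain N where N: "\<forall>g. (\<forall>i\<le>N. g i = f i) \<longrightarrow> map (\<lambda>t. evalt g s t) ts = map (\<lambda>t. evalt f s t) ts"
    using map_loc[of ts f "\<lambda>g t. evalt g s t"] GFn by blast
  show ?case
  proof (intro exI[of _ N] allI impI)
    fix g assume "\<forall>i\<le>N. g i = f i"
    then have "map (\<lambda>t. evalt g s t) ts = map (\<lambda>t. evalt f s t) ts" using N by blast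
    then show "evalt g s (GFn G ts) = evalt f s (GFn G ts)" by (simp only: evalt.simps)
  qed
next
  case (FSym t)
  obtain N where N: "\<forall>g. (\<forall>i\<le>N. g i = f i) \<longrightarrow> evalt g s t = evalt f s t" using FSym by blast
  have M: "\<forall>g. (\<forall>i\<le>evalt f s t. g i = f i) \<longrightarrow> g (evalt f s t) = f (evalt f s t)" by blast
  show ?case
    by (rule loc2[where P="\<lambda>g. evalt g s t" and Q="\<lambda>g. g (evalt f s t)" and R="\<lambda>g. evalt g s (FSym t)", OF N M]) simp
next
  case (Ell G u x v)
  obtain N1 where N1: "\<forall>g. (\<forall>i\<le>N1. g i = f i) \<longrightarrow> evalt g s v = evalt f s v" using Ell by blast
  obtain N2 where N2: "\<forall>g. (\<forall>i\<le>N2. g i = f i) \<longrightarrow>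
      map (\<lambda>j. evalt g (s(x:=j)) u) [0..<Suc (evalt f s v)] = map (\<lambda>j. evalt f (s(x:=j)) u) [0..<Suc (evalt f s v)]"
    using map_loc[of "[0..<Suc (evalt f s v)]" f "\<lambda>g j. evalt g (s(x:=j)) u"] Ell by blast
  show ?case
  proof (intro exI[of _ "max N1 N2"] allI impI)
    fix g assume g: "\<forall>i\<le>max N1 N2. g i = f i"
    have g1: "\<forall>i\<le>N1. g i = f i" and g2: "\<forall>i\<le>N2. g i = f i" using g by simp_all
    have "evalt g s v = evalt f s v" using N1 g1 by blast
    moreover have "map (\<lambda>j. evalt g (s(x:=j)) u) [0..<Suc (evalt f s v)] = map (\<lambda>j. evalt f (s(x:=j)) u) [0..<Suc (evalt f s v)]"
      using N2 g2 by blast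
    ultimately show "evalt g s (Ell G u x v) = evalt f s (Ell G u x v)" by (simp only: evalt.simps)
  qed
qed

lemma sat_loc:
  "qfree \<phi> \<Longrightarrow> \<exists>N. \<forall>g. (\<forall>i\<le>N. g i = f i) \<longrightarrow> sat g s \<phi> = sat f s \<phi>"
proof (induction \<phi>)
  case (Eq a b)
  obtain N1 where N1: "\<forall>g. (\<forall>i\<le>N1. g i = f i) \<longrightarrow> evalt g s a = evalt f s a" using evalt_loc by blast
  obtain N2 where N2: "\<forall>g. (\<forall>i\<le>N2. g i = f i) \<longrightarrow> evalt g s b = evalt f s b" using evalt_loc by blast
  show ?case
    by (rule loc2[where P="\<lambda>g. evalt g s a" and Q="\<lambda>g. evalt g s b" and R="\<lambda>g. sat g s (Eq a b)", OF N1 N2]) simp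
next
  case (Pred p ts)
  obtain N where N: "\<forall>g. (\<forall>i\<le>N. g i = f i) \<longrightarrow> map (\<lambda>t. evalt g s t) ts = map (\<lambda>t. evalt f s t) ts"
    using map_loc[of ts f "\<lambda>g t. evalt g s t"] evalt_loc by blast
  show ?case
  proof (intro exI[of _ N] allI impI)
    fix g assume "\<forall>i\<le>N. g i = f i"
    then have "map (\<lambda>t. evalt g s t) ts = map (\<lambda>t. evalt f s t) ts" using N by blast
    then show "sat g s (Pred p ts) = sat f s (Pred p ts)" by (simp only: sat.simps)
  qed
next
  case (Neg a)
  then show ?case by auto
next
  case (Conj a b)
  then obtain N1 N2 where N1: "\<forall>g. (\<forall>i\<le>N1. g i = f i) \<longrightarrow> sat g s a = sat f s a"
    and N2: "\<forall>g. (\<forall>i\<le>N2. g i = f i) \<longrightarrow> sat g s b = sat f s b" by auto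
  show ?case
    by (rule loc2[where P="\<lambda>g. sat g s a" and Q="\<lambda>g. sat g s b" and R="\<lambda>g. sat g s (Conj a b)", OF N1 N2]) simp
next
  case (Disj a b)
  then obtain N1 N2 where N1: "\<forall>g. (\<forall>i\<le>N1. g i = f i) \<longrightarrow> sat g s a = sat f s a"
    and N2: "\<forall>g. (\<forall>i\<le>N2. g i = f i) \<longrightarrow> sat g s b = sat f s b" by auto
  show ?case
    by (rule loc2[where P="\<lambda>g. sat g s a" and Q="\<lambda>g. sat g s b" and R="\<lambda>g. sat g s (Disj a b)", OF N1 N2]) simp
next
  case (Imp a b)
  then obtain N1 N2 where N1: "\<forall>g. (\<forall>i\<le>N1. g i = f i) \<longrightarrow> sat g s a = sat f s a"
    and N2: "\<forall>g. (\<forall>i\<le>N2. g i = f i) \<longrightarrow> sat g s b = sat f s b" by auto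
  show ?case
    by (rule loc2[where P="\<lambda>g. sat g s a" and Q="\<lambda>g. sat g s b" and R="\<lambda>g. sat g s (Imp a b)", OF N1 N2]) simp
next
  case (All x1 \<phi>)
  then show ?case by simp
next
  case (Ex x1 \<phi>)
  then show ?case by simp
qed

theorem lemma4p4:
  fixes S :: "(nat \<Rightarrow> nat) set" and x y :: nat and \<phi> :: fml
  assumes "qfree \<phi>"
    and "defines_set (Ex x (All y \<phi>)) S"
  shows "overguessable S"
proof -
  define C where "C a = {g. \<forall>b. sat g (((\<lambda>_. 0)(x := a))(y := b)) \<phi>}" for a
  have S: "f \<in> S \<longleftrightarrow> (\<exists>a. f \<in> C a)" for f
    using assms(2) unfolding defines_set_def models_def C_def by auto
  define ext where "ext \<sigma> a = (\<exists>g\<in>C a. \<forall>i<length \<sigma>. g i = \<sigma> ! i)" for \<sigma> :: "nat list" and a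
  define \<mu> where "\<mu> \<sigma> = (if \<exists>a\<le>length \<sigma>. ext \<sigma> a then enat (LEAST a. a \<le> length \<sigma> \<and> ext \<sigma> a)
       else enat (length \<sigma>))" for \<sigma>
  have init_nth: "i < length (init f n) \<Longrightarrow> init f n ! i = f i" for f n i
    unfolding init_def by (simp del: upt_Suc)
  have len: "length (init f n) = Suc n" for f n unfolding init_def by simp
  have part1: "\<exists>B::nat. \<forall>\<^sub>F n in sequentially. \<mu> (init f n) \<le> enat B" if "f \<in> S" for f
  proof -
    obtain a where a: "f \<in> C a" using S \<open>f \<in> S\<close> by auto
    have "\<mu> (init f n) \<le> enat a" if "n \<ge> a" for n
    proof -
      have e: "ext (init f n) a" unfolding ext_def using a init_nth by auto
      have "a \<le> length (init f n)" using that len by simp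
      then have "(LEAST a. a \<le> length (init f n) \<and> ext (init f n) a) \<le> a"
        using e by (intro Least_le) simp
      then show ?thesis unfolding \<mu>_def using e \<open>a \<le> length (init f n)\<close> by auto
    qed
    then show ?thesis unfolding eventually_sequentially by blast
  qed
  have part2: "\<forall>\<^sub>F n in sequentially. enat B \<le> \<mu> (init f n)" if "f \<notin> S" for f B
  proof -
    have "\<exists>N. \<forall>a<B. \<forall>g. (\<forall>i\<le>N. g i = f i) \<longrightarrow> g \<notin> C a" for B
    proof (induction B)
      case 0
      then show ?case by simp
    next
      case (Suc B)
      then obtain N1 where N1: "\<forall>a<B. \<forall>g. (\<forall>i\<le>N1. g i = f i) \<longrightarrow> g \<notin> C a" by blast
      have "f \<notin> C B" using S \<open>f \<notin> S\<close> by auto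
      then obtain b where b: "\<not> sat f (((\<lambda>_. 0)(x := B))(y := b)) \<phi>" unfolding C_def by auto
      obtain N2 where N2: "\<forall>g. (\<forall>i\<le>N2. g i = f i) \<longrightarrow>
          sat g (((\<lambda>_. 0)(x := B))(y := b)) \<phi> = sat f (((\<lambda>_. 0)(x := B))(y := b)) \<phi>"
        using sat_loc[OF assms(1)] by blast
      have "\<forall>a<Suc B. \<forall>g. (\<forall>i\<le>max N1 N2. g i = f i) \<longrightarrow> g \<notin> C a"
      proof (intro allI impI)
        fix a g assume "a < Suc B" "\<forall>i\<le>max N1 N2. g i = f i"
        then show "g \<notin> C a"
        proof (cases "a < B")
          case True then show ?thesis using N1 \<open>\<forall>i\<le>max N1 N2. g i = f i\<close> by auto
        next
          case False
          then have "a = B" using \<open>a < Suc B\<close> by simp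
          have "\<forall>i\<le>N2. g i = f i" using \<open>\<forall>i\<le>max N1 N2. g i = f i\<close> by simp
          then have "\<not> sat g (((\<lambda>_. 0)(x := B))(y := b)) \<phi>" using N2 b by blast
          then show ?thesis using \<open>a = B\<close> unfolding C_def by blast
        qed
      qed
      then show ?case by blast
    qed
    then obtain N where N: "\<forall>a<B. \<forall>g. (\<forall>i\<le>N. g i = f i) \<longrightarrow> g \<notin> C a" by blast
    have "enat B \<le> \<mu> (init f n)" if "n \<ge> max N B" for n
    proof -
      have ne: "\<not> ext (init f n) a" if "a < B" for a
      proof
        assume "ext (init f n) a"
        then obtain g where g: "g \<in> C a" "\<forall>i<length (init f n). g i = init f n ! i"
          unfolding ext_def by blast
        have "\<forall>i\<le>N. g i = f i"
        proof (intro allI impI)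
          fix i assume "i \<le> N"
          then have "i < length (init f n)" using len \<open>n \<ge> max N B\<close> by simp
          then show "g i = f i" using g(2) init_nth by auto
        qed
        then show False using N \<open>a < B\<close> g(1) by blast
      qed
      show ?thesis
      proof (cases "\<exists>a\<le>length (init f n). ext (init f n) a")
        case True
        define L where "L = (LEAST a. a \<le> length (init f n) \<and> ext (init f n) a)"
        have P: "L \<le> length (init f n) \<and> ext (init f n) L"
          unfolding L_def
          by (rule LeastI_ex[where P="\<lambda>a. a \<le> length (init f n) \<and> ext (init f n) a"]) (use True in blast)
        then have "\<not> L < B" using ne by blast
        moreover have "\<mu> (init f n) = enat L" unfolding \<mu>_def L_def using True by simp
        ultimately show ?thesis by simp
      next
        case False
        then have "\<mu> (init f n) = enat (Suc n)" unfolding \<mu>_def by (simp only: if_False len)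
        then show ?thesis using \<open>n \<ge> max N B\<close> by simp
      qed
    qed
    then show ?thesis unfolding eventually_sequentially by blast
  qed
  show ?thesis unfolding overguessable_def
  proof (intro exI[of _ \<mu>] conjI ballI allI impI)
    fix f assume "f \<in> S" then show "\<exists>B::nat. \<forall>\<^sub>F n in sequentially. \<mu> (init f n) \<le> enat B" by (rule part1)
  next
    fix f :: "nat \<Rightarrow> nat" and B :: nat assume "f \<notin> S"
    then show "\<forall>\<^sub>F n in sequentially. enat B \<le> \<mu> (init f n)" by (rule part2)
  qed
qed

end
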